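(* Let $\mathcal{G}$ be an MVPP always-grabbing pawn game with pawns $[d]$, let $\langle v,P\rangle$ be a configuration, let $j\in[d]$ be the pawn with $v\in V_j$, and let $P'\subseteq P$. (1) If ($j\in P$ implies $j\in P'$) and Player 1 wins from $\langle v,P\rangle$, then Player 1 wins from $\langle v,P'\rangle$. (2) If ($j\notin P'$ implies $j\notin P$) and Player 2 wins from $\langle v,P'\rangle$, then Player 2 wins from $\langle v,P\rangle$.
   Context: A pawn game with $d$ pawns consists of a finite directed graph $(V,E)$, a target set $T\subseteq V$, and sets $V_1,\dots,V_d$ partitioning $V$ (MVPP), where Pawn $j$ owns the vertices in $V_j$. A configuration $\langle v,P\rangle$ gives the token position and the set $P\subseteq[d]$ of pawns controlled by Player 1 (Player 2 controls the rest). At $\langle v,P\rangle$, Player 1 moves the token along an edge iff he controls the pawn owning $v$; otherwise Player 2 moves. Under always grabbing, after every move of Player $i$, the other player must take exactly one pawn currently controlled by Player $i$. Player 1 wins a play iff it visits $T$, otherwise Player 2 wins; winning from a configuration means having a strategy that wins against all opponent strategies. *)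

theory Defs
  imports Main
begin

text \<open>A vertex v is owned by pawn own v (MVPP: each vertex is owned
by exactly one pawn, i.e. V_j = {v \<in> V. own v = j}).
A configuration is a pair (v, P): token position and the set of pawns controlled by Player 1.\<close>

type_synonym 'v config = "'v \<times> nat set"

definition pawn_game :: "'v set \<Rightarrow> ('v \<times> 'v) set \<Rightarrow> 'v set \<Rightarrow> nat \<Rightarrow> ('v \<Rightarrow> nat) \<Rightarrow> bool" where
  "pawn_game V E T d own \<longleftrightarrow>
     finite V \<and> E \<subseteq> V \<times> V \<and> T \<subseteq> V \<and>
     (\<forall>v\<in>V. own v \<in> {1..d}) \<and>
     (\<forall>v\<in>V. \<exists>u. (v, u) \<in> E)"

text \<open>A strategy of a player: a move function (history to successor vertex), used when the
player controls the pawn owning the current vertex, and a grab function (history and the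
opponent's chosen successor to a pawn), used after the opponent has moved.\<close>

type_synonym 'v strategy = "('v config list \<Rightarrow> 'v) \<times> ('v config list \<Rightarrow> 'v \<Rightarrow> nat)"

definition legal1 :: "'v set \<Rightarrow> ('v \<times> 'v) set \<Rightarrow> nat \<Rightarrow> ('v \<Rightarrow> nat) \<Rightarrow> 'v strategy \<Rightarrow> bool" where
  "legal1 V E d own \<sigma> \<longleftrightarrow>
     (\<forall>h v P. h \<noteq> [] \<longrightarrow> last h = (v, P) \<longrightarrow> v \<in> V \<longrightarrow> P \<subseteq> {1..d} \<longrightarrow>
        (own v \<in> P \<longrightarrow> (v, fst \<sigma> h) \<in> E) \<and>
        (own v \<notin> P \<longrightarrow> (\<forall>u. (v, u) \<in> E \<longrightarrow> snd \<sigma> h u \<in> {1..d} - P)))"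

definition legal2 :: "'v set \<Rightarrow> ('v \<times> 'v) set \<Rightarrow> nat \<Rightarrow> ('v \<Rightarrow> nat) \<Rightarrow> 'v strategy \<Rightarrow> bool" where
  "legal2 V E d own \<tau> \<longleftrightarrow>
     (\<forall>h v P. h \<noteq> [] \<longrightarrow> last h = (v, P) \<longrightarrow> v \<in> V \<longrightarrow> P \<subseteq> {1..d} \<longrightarrow>
        (own v \<notin> P \<longrightarrow> (v, fst \<tau> h) \<in> E) \<and>
        (own v \<in> P \<longrightarrow> (\<forall>u. (v, u) \<in> E \<longrightarrow> snd \<tau> h u \<in> P)))"

definition next_config :: "('v \<Rightarrow> nat) \<Rightarrow> 'v strategy \<Rightarrow> 'v strategy \<Rightarrow> 'v config list \<Rightarrow> 'v config" where
  "next_config own \<sigma> \<tau> h =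
     (let (v, P) = last h in
      if own v \<in> P
      then (let u = fst \<sigma> h in (u, P - {snd \<tau> h u}))
      else (let u = fst \<tau> h in (u, P \<union> {snd \<sigma> h u})))"

fun history :: "('v \<Rightarrow> nat) \<Rightarrow> 'v strategy \<Rightarrow> 'v strategy \<Rightarrow> 'v config \<Rightarrow> nat \<Rightarrow> 'v config list" where
  "history own \<sigma> \<tau> c 0 = [c]"
| "history own \<sigma> \<tau> c (Suc n) =
     history own \<sigma> \<tau> c n @ [next_config own \<sigma> \<tau> (history own \<sigma> \<tau> c n)]"

definition play :: "('v \<Rightarrow> nat) \<Rightarrow> 'v strategy \<Rightarrow> 'v strategy \<Rightarrow> 'v config \<Rightarrow> nat \<Rightarrow> 'v config" where
  "play own \<sigma> \<tau> c n = last (history own \<sigma> \<tau> c n)"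

definition wins1 :: "'v set \<Rightarrow> ('v \<times> 'v) set \<Rightarrow> 'v set \<Rightarrow> nat \<Rightarrow> ('v \<Rightarrow> nat) \<Rightarrow> 'v config \<Rightarrow> bool" where
  "wins1 V E T d own c \<longleftrightarrow>
     (\<exists>\<sigma>. legal1 V E d own \<sigma> \<and>
        (\<forall>\<tau>. legal2 V E d own \<tau> \<longrightarrow> (\<exists>n. fst (play own \<sigma> \<tau> c n) \<in> T)))"

definition wins2 :: "'v set \<Rightarrow> ('v \<times> 'v) set \<Rightarrow> 'v set \<Rightarrow> nat \<Rightarrow> ('v \<Rightarrow> nat) \<Rightarrow> 'v config \<Rightarrow> bool" where
  "wins2 V E T d own c \<longleftrightarrow>
     (\<exists>\<tau>. legal2 V E d own \<tau> \<and>
        (\<forall>\<sigma>. legal1 V E d own \<sigma> \<longrightarrow> (\<forall>n. fst (play own \<sigma> \<tau> c n) \<notin> T)))"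

end

theory Submission
  imports Defs
begin

definition fix1 :: "('v \<times> 'v) set \<Rightarrow> nat \<Rightarrow> 'v strategy \<Rightarrow> 'v strategy" where
  "fix1 E d \<sigma> = (\<lambda>h. if (fst (last h), fst \<sigma> h) \<in> E then fst \<sigma> h else (SOME x. (fst (last h), x) \<in> E),
     \<lambda>h u. if snd \<sigma> h u \<in> {1..d} - snd (last h) then snd \<sigma> h u else (SOME y. y \<in> {1..d} - snd (last h)))"

definition fix2 :: "('v \<times> 'v) set \<Rightarrow> 'v strategy \<Rightarrow> 'v strategy" where
  "fix2 E \<sigma> = (\<lambda>h. if (fst (last h), fst \<sigma> h) \<in> E then fst \<sigma> h else (SOME x. (fst (last h), x) \<in> E),
     \<lambda>h u. if snd \<sigma> h u \<in> snd (last h) then snd \<sigma> h u else (SOME y. y \<in> snd (last h)))"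

lemma legal_fix1:
  assumes "pawn_game V E T d own" shows "legal1 V E d own (fix1 E d \<sigma>)"
  unfolding legal1_def
proof (intro allI impI conjI)
  fix h v P assume h: "h \<noteq> []" "last h = (v, P)" "v \<in> V" "P \<subseteq> {1..d}"
  { assume "own v \<in> P"
    from assms h obtain u where "(v,u) \<in> E" unfolding pawn_game_def by blast
    then show "(v, fst (fix1 E d \<sigma>) h) \<in> E" using h unfolding fix1_def
      by (auto intro: someI) }
  { assume a: "own v \<notin> P"
    fix u assume "(v,u) \<in> E"
    have "own v \<in> {1..d} - P" using a assms h unfolding pawn_game_def by auto
    then have "(SOME y. y \<in> {1..d} - P) \<in> {1..d} - P" by (rule someI)
    then show "snd (fix1 E d \<sigma>) h u \<in> {1..d} - P" using h unfolding fix1_def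
      by (simp only: fst_conv snd_conv split: if_split) auto }
qed

lemma legal_fix2:
  assumes "pawn_game V E T d own" shows "legal2 V E d own (fix2 E \<sigma>)"
  unfolding legal2_def
proof (intro allI impI conjI)
  fix h v P assume h: "h \<noteq> []" "last h = (v, P)" "v \<in> V" "P \<subseteq> {1..d}"
  { assume "own v \<notin> P"
    from assms h obtain u where "(v,u) \<in> E" unfolding pawn_game_def by blast
    then show "(v, fst (fix2 E \<sigma>) h) \<in> E" using h unfolding fix2_def
      by (auto intro: someI) }
  { assume a: "own v \<in> P"
    fix u assume "(v,u) \<in> E"
    then show "snd (fix2 E \<sigma>) h u \<in> P" using h a unfolding fix2_def
      by (auto intro: someI) }
qed

lemma history_Suc': "history own \<sigma> \<tau> c (Suc n) = history own \<sigma> \<tau> c n @ [next_config own \<sigma> \<tau> (history own \<sigma> \<tau> c n)]"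
  by simp

lemma history_ne: "history own \<sigma> \<tau> c n \<noteq> []"
  by (cases n) auto

declare history.simps(2)[simp del]

definition cons1 :: "('v \<times> 'v) set \<Rightarrow> ('v \<Rightarrow> nat) \<Rightarrow> 'v strategy \<Rightarrow> (nat \<Rightarrow> 'v config) \<Rightarrow> bool" where
  "cons1 E own \<sigma> s \<longleftrightarrow> (\<forall>n.
     (own (fst (s n)) \<in> snd (s n) \<longrightarrow> (\<exists>k\<in>snd (s n). s (Suc n) = (fst \<sigma> (map s [0..<Suc n]), snd (s n) - {k}))) \<and>
     (own (fst (s n)) \<notin> snd (s n) \<longrightarrow> (\<exists>u2. (fst (s n), u2) \<in> E \<and> s (Suc n) = (u2, snd (s n) \<union> {snd \<sigma> (map s [0..<Suc n]) u2}))))"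

definition cons2 :: "('v \<times> 'v) set \<Rightarrow> nat \<Rightarrow> ('v \<Rightarrow> nat) \<Rightarrow> 'v strategy \<Rightarrow> (nat \<Rightarrow> 'v config) \<Rightarrow> bool" where
  "cons2 E d own \<tau> s \<longleftrightarrow> (\<forall>n.
     (own (fst (s n)) \<in> snd (s n) \<longrightarrow> (\<exists>u2. (fst (s n), u2) \<in> E \<and> s (Suc n) = (u2, snd (s n) - {snd \<tau> (map s [0..<Suc n]) u2}))) \<and>
     (own (fst (s n)) \<notin> snd (s n) \<longrightarrow> (\<exists>g\<in>{1..d} - snd (s n). s (Suc n) = (fst \<tau> (map s [0..<Suc n]), snd (s n) \<union> {g}))))"

lemma lemA:
  assumes pg: "pawn_game V E T d own" and win: "\<forall>\<tau>. legal2 V E d own \<tau> \<longrightarrow> (\<exists>n. fst (play own \<sigma> \<tau> c n) \<in> T)"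
    and s0: "s 0 = c" and cs: "cons1 E own \<sigma> s"
  shows "\<exists>n. fst (s n) \<in> T"
proof -
  define \<tau>r :: "'a strategy" where "\<tau>r = (\<lambda>h. fst (s (length h)),
      \<lambda>h x. SOME k. k \<in> snd (last h) \<and> s (length h) = (x, snd (last h) - {k}))"
  define \<tau> where "\<tau> = fix2 E \<tau>r"
  have lg: "legal2 V E d own \<tau>" unfolding \<tau>_def by (rule legal_fix2[OF pg])
  have hist: "history own \<sigma> \<tau> c n = map s [0..<Suc n]" for n
  proof (induction n)
    case 0 then show ?case using s0 by simp
  next
    case (Suc n)
    define h where "h = map s [0..<Suc n]"
    have lh: "last h = s n" "length h = Suc n" unfolding h_def by simp_all
    have "next_config own \<sigma> \<tau> h = s (Suc n)"
    proof (cases "own (fst (s n)) \<in> snd (s n)")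
      case True
      then obtain k where k: "k \<in> snd (s n)" "s (Suc n) = (fst \<sigma> h, snd (s n) - {k})"
        using cs unfolding cons1_def h_def by blast
      let ?k = "SOME k. k \<in> snd (s n) \<and> s (Suc n) = (fst \<sigma> h, snd (s n) - {k})"
      have sk: "?k \<in> snd (s n) \<and> s (Suc n) = (fst \<sigma> h, snd (s n) - {?k})"
        by (rule someI[of _ k]) (use k in auto)
      have "snd \<tau> h (fst \<sigma> h) = ?k" unfolding \<tau>_def fix2_def \<tau>r_def using lh sk by simp
      then show ?thesis using True sk lh unfolding next_config_def
        by (cases "s n") (auto simp: Let_def)
    next
      case False
      then obtain u2 where u: "(fst (s n), u2) \<in> E" "s (Suc n) = (u2, snd (s n) \<union> {snd \<sigma> h u2})"
        using cs unfolding cons1_def h_def by blast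
      have "fst \<tau> h = u2" unfolding \<tau>_def fix2_def \<tau>r_def using lh u by simp
      then show ?thesis using False u lh unfolding next_config_def
        by (cases "s n") (auto simp: Let_def)
    qed
    then show ?case using Suc unfolding h_def by (simp add: history_Suc')
  qed
  from win lg obtain n where "fst (play own \<sigma> \<tau> c n) \<in> T" by blast
  then show ?thesis unfolding play_def hist by (auto)
qed

lemma lemB:
  assumes pg: "pawn_game V E T d own" and win: "\<forall>\<sigma>. legal1 V E d own \<sigma> \<longrightarrow> (\<forall>n. fst (play own \<sigma> \<tau> c n) \<notin> T)"
    and s0: "s 0 = c" and cs: "cons2 E d own \<tau> s"
  shows "fst (s n) \<notin> T"
proof -
  define \<sigma>r :: "'a strategy" where "\<sigma>r = (\<lambda>h. fst (s (length h)),
      \<lambda>h x. SOME g. g \<in> {1..d} - snd (last h) \<and> s (length h) = (x, snd (last h) \<union> {g}))"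
  define \<sigma> where "\<sigma> = fix1 E d \<sigma>r"
  have lg: "legal1 V E d own \<sigma>" unfolding \<sigma>_def by (rule legal_fix1[OF pg])
  have hist: "history own \<sigma> \<tau> c n = map s [0..<Suc n]" for n
  proof (induction n)
    case 0 then show ?case using s0 by simp
  next
    case (Suc n)
    define h where "h = map s [0..<Suc n]"
    have lh: "last h = s n" "length h = Suc n" unfolding h_def by simp_all
    have "next_config own \<sigma> \<tau> h = s (Suc n)"
    proof (cases "own (fst (s n)) \<in> snd (s n)")
      case False
      then obtain k where k: "k \<in> {1..d} - snd (s n)" "s (Suc n) = (fst \<tau> h, snd (s n) \<union> {k})"
        using cs unfolding cons2_def h_def by blast
      let ?k = "SOME k. k \<in> {1..d} - snd (s n) \<and> s (Suc n) = (fst \<tau> h, snd (s n) \<union> {k})"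
      have sk: "?k \<in> {1..d} - snd (s n) \<and> s (Suc n) = (fst \<tau> h, snd (s n) \<union> {?k})"
        by (rule someI[of _ k]) (use k in auto)
      have "snd \<sigma> h (fst \<tau> h) = ?k" unfolding \<sigma>_def fix1_def \<sigma>r_def using lh sk by simp
      then show ?thesis using False sk lh unfolding next_config_def
        by (cases "s n") (auto simp: Let_def)
    next
      case True
      then obtain u2 where u: "(fst (s n), u2) \<in> E" "s (Suc n) = (u2, snd (s n) - {snd \<tau> h u2})"
        using cs unfolding cons2_def h_def by blast
      have "fst \<sigma> h = u2" unfolding \<sigma>_def fix1_def \<sigma>r_def using lh u by simp
      then show ?thesis using True u lh unfolding next_config_def
        by (cases "s n") (auto simp: Let_def)
    qed
    then show ?case using Suc unfolding h_def by (simp add: history_Suc')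
  qed
  from win lg have "fst (play own \<sigma> \<tau> c n) \<notin> T" by blast
  then show ?thesis unfolding play_def hist by (auto)
qed

fun shr :: "('v config list \<Rightarrow> 'v config list \<Rightarrow> 'v config) \<Rightarrow> 'v config \<Rightarrow> 'v config list \<Rightarrow> 'v config list" where
  "shr f c0 [] = []"
| "shr f c0 [c] = [c0]"
| "shr f c0 (c # c' # r) = f (rev (shr f c0 (c' # r))) (rev (c # c' # r)) # shr f c0 (c' # r)"

definition sh where "sh f c0 h = rev (shr f c0 (rev h))"

lemma sh_single[simp]: "sh f c0 [c] = [c0]" by (simp add: sh_def)

lemma sh_snoc: "h \<noteq> [] \<Longrightarrow> sh f c0 (h @ [c]) = sh f c0 h @ [f (sh f c0 h) (h @ [c])]"
proof -
  assume "h \<noteq> []"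
  then obtain c' r where "rev h = c' # r" by (cases "rev h") auto
  then show ?thesis unfolding sh_def by (simp add: rev_swap[symmetric] )
qed


definition F1 :: "('v \<Rightarrow> nat) \<Rightarrow> 'v strategy \<Rightarrow> 'v config list \<Rightarrow> 'v config list \<Rightarrow> 'v config" where
  "F1 own \<sigma> S hn = (let h = butlast hn; u = fst (last h); Q' = snd (last h); u2 = fst (last hn);
     Q2' = snd (last hn); Q = snd (last S) in
     if own u \<in> Q' then (u2, if own u2 \<in> Q - Q2' then Q - {own u2} else Q - (Q' - Q2'))
     else (u2, Q \<union> {snd \<sigma> S u2}))"

definition sig1r where
  "sig1r own \<sigma> c0 = (\<lambda>h. fst \<sigma> (sh (F1 own \<sigma>) c0 h),
     \<lambda>h u2. if own u2 \<in> snd (last (sh (F1 own \<sigma>) c0 h)) \<union> {snd \<sigma> (sh (F1 own \<sigma>) c0 h) u2}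
               \<and> own u2 \<notin> snd (last h) then own u2 else snd \<sigma> (sh (F1 own \<sigma>) c0 h) u2)"

definition sig1 where "sig1 own E d \<sigma> c0 = fix1 E d (sig1r own \<sigma> c0)"

lemma fix1_fst: "(fst (last h), fst \<sigma> h) \<in> E \<Longrightarrow> fst (fix1 E d \<sigma>) h = fst \<sigma> h"
  by (simp add: fix1_def)
lemma fix1_snd: "snd \<sigma> h u \<in> {1..d} - snd (last h) \<Longrightarrow> snd (fix1 E d \<sigma>) h u = snd \<sigma> h u"
  by (simp add: fix1_def)
lemma fix2_fst: "(fst (last h), fst \<sigma> h) \<in> E \<Longrightarrow> fst (fix2 E \<sigma>) h = fst \<sigma> h"
  by (simp add: fix2_def)
lemma fix2_snd: "snd \<sigma> h u \<in> snd (last h) \<Longrightarrow> snd (fix2 E \<sigma>) h u = snd \<sigma> h u"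
  by (simp add: fix2_def)

lemma part1:
  assumes pg: "pawn_game V E T d own" and vV: "v \<in> V" and PS: "P \<subseteq> {1..d}" and PP: "P' \<subseteq> P"
    and ctl: "own v \<in> P \<longrightarrow> own v \<in> P'" and w: "wins1 V E T d own (v, P)"
  shows "wins1 V E T d own (v, P')"
proof -
  have pgE: "\<And>a b. (a,b) \<in> E \<Longrightarrow> b \<in> V" and pgo: "\<And>u. u \<in> V \<Longrightarrow> own u \<in> {1..d}"
    using pg unfolding pawn_game_def by auto
  from w obtain \<sigma> where l\<sigma>: "legal1 V E d own \<sigma>"
    and win: "\<forall>\<tau>. legal2 V E d own \<tau> \<longrightarrow> (\<exists>n. fst (play own \<sigma> \<tau> (v,P) n) \<in> T)"
    unfolding wins1_def by blast
  define F where "F = F1 own \<sigma>"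
  define \<sigma>' where "\<sigma>' = sig1 own E d \<sigma> (v,P)"
  have l\<sigma>': "legal1 V E d own \<sigma>'" unfolding \<sigma>'_def sig1_def by (rule legal_fix1[OF pg])
  show ?thesis unfolding wins1_def
  proof (rule exI[of _ \<sigma>'], intro conjI allI impI)
    show "legal1 V E d own \<sigma>'" by (rule l\<sigma>')
    fix \<tau>' assume l\<tau>': "legal2 V E d own \<tau>'"
    define H where "H n = history own \<sigma>' \<tau>' (v,P') n" for n
    define S where "S n = sh F (v,P) (H n)" for n
    define s where "s n = last (S n)" for n
    have Hne: "H n \<noteq> []" for n unfolding H_def by (rule history_ne)
    have HS: "H (Suc n) = H n @ [next_config own \<sigma>' \<tau>' (H n)]" for n
      unfolding H_def by (rule history_Suc')
    have SS: "S (Suc n) = S n @ [F (S n) (H (Suc n))]" for n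
      unfolding S_def HS by (rule sh_snoc[OF Hne])
    have sS: "s (Suc n) = F (S n) (H (Suc n))" for n unfolding s_def SS by simp
    have S_eq: "S n = map s [0..<Suc n]" for n
    proof (induction n)
      case 0 then show ?case unfolding s_def S_def H_def by simp
    next
      case (Suc n) then show ?case using SS[of n] sS[of n] by simp
    qed
    have s0: "s 0 = (v,P)" unfolding s_def S_def H_def by simp
    define Inv where "Inv n \<longleftrightarrow> fst (s n) = fst (last (H n)) \<and> fst (s n) \<in> V \<and>
       snd (last (H n)) \<subseteq> snd (s n) \<and> snd (s n) \<subseteq> {1..d} \<and>
       (own (fst (s n)) \<in> snd (s n) \<longleftrightarrow> own (fst (s n)) \<in> snd (last (H n)))" for n
    define C where "C n \<longleftrightarrow>
     (own (fst (s n)) \<in> snd (s n) \<longrightarrow> (\<exists>k\<in>snd (s n). s (Suc n) = (fst \<sigma> (map s [0..<Suc n]), snd (s n) - {k}))) \<and>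
     (own (fst (s n)) \<notin> snd (s n) \<longrightarrow> (\<exists>u2. (fst (s n), u2) \<in> E \<and> s (Suc n) = (u2, snd (s n) \<union> {snd \<sigma> (map s [0..<Suc n]) u2})))" for n
    have step: "Inv (Suc n) \<and> C n" if I: "Inv n" for n
    proof -
      obtain u Q' where lH: "last (H n) = (u, Q')" by (cases "last (H n)")
      obtain Q where sn: "s n = (u, Q)" using I lH unfolding Inv_def by (cases "s n") auto
      have uV: "u \<in> V" and QQ: "Q' \<subseteq> Q" and QS: "Q \<subseteq> {1..d}" and cc: "own u \<in> Q \<longleftrightarrow> own u \<in> Q'"
        using I lH sn unfolding Inv_def by auto
      have lS: "last (S n) = (u, Q)" using sn s_def by simp
      have Sne: "S n \<noteq> []" using S_eq by simp
      have Sd: "sh (F1 own \<sigma>) (v,P) (H n) = S n" by (simp add: S_def F_def)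
      have sF: "s (Suc n) = F (S n) (H n @ [next_config own \<sigma>' \<tau>' (H n)])" using sS HS by simp
      show ?thesis
      proof (cases "own u \<in> Q'")
        case True
        have mv: "(u, fst \<sigma> (S n)) \<in> E" using l\<sigma> Sne lS uV QS True cc unfolding legal1_def by blast
        define u2 where "u2 = fst \<sigma> (S n)"
        have f\<sigma>': "fst \<sigma>' (H n) = u2" unfolding \<sigma>'_def sig1_def u2_def
          by (subst fix1_fst) (simp_all add: sig1r_def Sd lH mv)
        define k' where "k' = snd \<tau>' (H n) u2"
        have k': "k' \<in> Q'" using l\<tau>' Hne lH uV QQ QS True mv unfolding legal2_def k'_def u2_def by blast
        have nc: "next_config own \<sigma>' \<tau>' (H n) = (u2, Q' - {k'})"
          unfolding next_config_def using lH True f\<sigma>' k'_def by simp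
        have kk: "Q' - (Q' - {k'}) = {k'}" using k' by auto
        have s1: "s (Suc n) = (u2, if own u2 \<in> Q - (Q' - {k'}) then Q - {own u2} else Q - {k'})"
          using sF unfolding nc F_def F1_def Let_def using lH lS True kk by simp
        have u2V: "u2 \<in> V" using pgE mv u2_def by blast
        have "Inv (Suc n)" unfolding Inv_def using s1 HS[of n] nc u2V QQ QS k' by auto
        moreover have "C n" unfolding C_def using sn s1 True cc k' QQ S_eq u2_def by auto
        ultimately show ?thesis by blast
      next
        case False
        define u2 where "u2 = fst \<tau>' (H n)"
        have mv: "(u, u2) \<in> E" using l\<tau>' Hne lH uV QQ QS False unfolding legal2_def u2_def by blast
        have u2V: "u2 \<in> V" using pgE mv by blast
        define g where "g = snd \<sigma> (S n) u2"
        have g: "g \<in> {1..d} - Q" using l\<sigma> Sne lS uV QS False cc mv unfolding legal1_def g_def by blast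
        define g' where "g' = (if own u2 \<in> Q \<union> {g} \<and> own u2 \<notin> Q' then own u2 else g)"
        have g'': "g' \<in> {1..d} - Q'" using g pgo[OF u2V] QQ unfolding g'_def by auto
        have r: "snd (sig1r own \<sigma> (v,P)) (H n) u2 = g'" by (simp add: sig1r_def Sd lS g'_def g_def lH)
        have s\<sigma>': "snd \<sigma>' (H n) u2 = g'" unfolding \<sigma>'_def sig1_def
          by (subst fix1_snd) (use r g'' lH in auto)
        have nc: "next_config own \<sigma>' \<tau>' (H n) = (u2, Q' \<union> {g'})"
          unfolding next_config_def using lH False s\<sigma>' u2_def by simp
        have s1: "s (Suc n) = (u2, Q \<union> {g})"
          using sF unfolding nc F_def F1_def Let_def using lH lS False g_def by simp
        have "Inv (Suc n)" unfolding Inv_def using s1 HS[of n] nc u2V QQ QS g g'' unfolding g'_def by auto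
        moreover have "C n" unfolding C_def using sn s1 False cc mv S_eq g_def by auto
        ultimately show ?thesis by blast
      qed
    qed
    have I0: "Inv 0" unfolding Inv_def using s0 vV PS PP ctl unfolding H_def by auto
    have Iall: "Inv n" for n by (induction n) (use I0 step in auto)
    have "cons1 E own \<sigma> s" unfolding cons1_def using step[OF Iall] unfolding C_def by blast
    from lemA[OF pg win s0 this] obtain n where "fst (s n) \<in> T" by blast
    then show "\<exists>n. fst (play own \<sigma>' \<tau>' (v, P') n) \<in> T"
      using Iall[of n] unfolding Inv_def play_def H_def by auto
  qed
qed


definition F2 :: "('v \<Rightarrow> nat) \<Rightarrow> 'v strategy \<Rightarrow> 'v config list \<Rightarrow> 'v config list \<Rightarrow> 'v config" where
  "F2 own \<tau> S hn = (let h = butlast hn; u = fst (last h); Q = snd (last h); u2 = fst (last hn);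
     Q2 = snd (last hn); Q' = snd (last S) in
     if own u \<in> Q' then (u2, Q' - {snd \<tau> S u2})
     else (u2, Q' \<union> {if own u2 \<in> Q2 - Q' then own u2 else (SOME y. y \<in> Q2 - Q)}))"

definition tau2r where
  "tau2r own \<tau> c0 = (\<lambda>h. fst \<tau> (sh (F2 own \<tau>) c0 h),
     \<lambda>h u2. if own u2 \<in> snd (last h) - (snd (last (sh (F2 own \<tau>) c0 h)) - {snd \<tau> (sh (F2 own \<tau>) c0 h) u2})
       then own u2 else snd \<tau> (sh (F2 own \<tau>) c0 h) u2)"

lemma part2:
  assumes pg: "pawn_game V E T d own" and vV: "v \<in> V" and PS: "P \<subseteq> {1..d}" and PP: "P' \<subseteq> P"
    and ctl: "own v \<notin> P' \<longrightarrow> own v \<notin> P" and w: "wins2 V E T d own (v, P')"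
  shows "wins2 V E T d own (v, P)"
proof -
  have pgE: "\<And>a b. (a,b) \<in> E \<Longrightarrow> b \<in> V" and pgo: "\<And>u. u \<in> V \<Longrightarrow> own u \<in> {1..d}"
    using pg unfolding pawn_game_def by auto
  from w obtain \<tau> where l\<tau>: "legal2 V E d own \<tau>"
    and win: "\<forall>\<sigma>. legal1 V E d own \<sigma> \<longrightarrow> (\<forall>n. fst (play own \<sigma> \<tau> (v,P') n) \<notin> T)"
    unfolding wins2_def by blast
  define F where "F = F2 own \<tau>"
  define \<tau>' where "\<tau>' = fix2 E (tau2r own \<tau> (v,P'))"
  have l\<tau>': "legal2 V E d own \<tau>'" unfolding \<tau>'_def by (rule legal_fix2[OF pg])
  show ?thesis unfolding wins2_def
  proof (rule exI[of _ \<tau>'], intro conjI allI impI)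
    show "legal2 V E d own \<tau>'" by (rule l\<tau>')
    fix \<sigma>' n assume l\<sigma>': "legal1 V E d own \<sigma>'"
    define H where "H n = history own \<sigma>' \<tau>' (v,P) n" for n
    define S where "S n = sh F (v,P') (H n)" for n
    define s where "s n = last (S n)" for n
    have Hne: "H n \<noteq> []" for n unfolding H_def by (rule history_ne)
    have HS: "H (Suc n) = H n @ [next_config own \<sigma>' \<tau>' (H n)]" for n
      unfolding H_def by (rule history_Suc')
    have SS: "S (Suc n) = S n @ [F (S n) (H (Suc n))]" for n
      unfolding S_def HS by (rule sh_snoc[OF Hne])
    have sS: "s (Suc n) = F (S n) (H (Suc n))" for n unfolding s_def SS by simp
    have S_eq: "S n = map s [0..<Suc n]" for n
    proof (induction n)
      case 0 then show ?case unfolding s_def S_def H_def by simp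
    next
      case (Suc n) then show ?case using SS[of n] sS[of n] by simp
    qed
    have s0: "s 0 = (v,P')" unfolding s_def S_def H_def by simp
    define Inv where "Inv n \<longleftrightarrow> fst (s n) = fst (last (H n)) \<and> fst (s n) \<in> V \<and>
       snd (s n) \<subseteq> snd (last (H n)) \<and> snd (last (H n)) \<subseteq> {1..d} \<and>
       (own (fst (s n)) \<in> snd (s n) \<longleftrightarrow> own (fst (s n)) \<in> snd (last (H n)))" for n
    define C where "C n \<longleftrightarrow>
     (own (fst (s n)) \<in> snd (s n) \<longrightarrow> (\<exists>u2. (fst (s n), u2) \<in> E \<and> s (Suc n) = (u2, snd (s n) - {snd \<tau> (map s [0..<Suc n]) u2}))) \<and>
     (own (fst (s n)) \<notin> snd (s n) \<longrightarrow> (\<exists>g\<in>{1..d} - snd (s n). s (Suc n) = (fst \<tau> (map s [0..<Suc n]), snd (s n) \<union> {g})))" for n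
    have step: "Inv (Suc n) \<and> C n" if I: "Inv n" for n
    proof -
      obtain u Q where lH: "last (H n) = (u, Q)" by (cases "last (H n)")
      obtain Q' where sn: "s n = (u, Q')" using I lH unfolding Inv_def by (cases "s n") auto
      have uV: "u \<in> V" and QQ: "Q' \<subseteq> Q" and QS: "Q \<subseteq> {1..d}" and cc: "own u \<in> Q \<longleftrightarrow> own u \<in> Q'"
        using I lH sn unfolding Inv_def by auto
      have lS: "last (S n) = (u, Q')" using sn s_def by simp
      have Sne: "S n \<noteq> []" using S_eq by simp
      have Sd: "sh (F2 own \<tau>) (v,P') (H n) = S n" by (simp add: S_def F_def)
      have sF: "s (Suc n) = F (S n) (H n @ [next_config own \<sigma>' \<tau>' (H n)])" using sS HS by simp
      show ?thesis
      proof (cases "own u \<in> Q'")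
        case True
        define u2 where "u2 = fst \<sigma>' (H n)"
        have mv: "(u, u2) \<in> E" using l\<sigma>' Hne lH uV QS True cc unfolding legal1_def u2_def by blast
        define k' where "k' = snd \<tau> (S n) u2"
        have k': "k' \<in> Q'" using l\<tau> Sne lS uV QQ QS True mv unfolding legal2_def k'_def by blast
        define k where "k = (if own u2 \<in> Q - (Q' - {k'}) then own u2 else k')"
        have kQ: "k \<in> Q" using k' QQ unfolding k_def by auto
        have r: "snd (tau2r own \<tau> (v,P')) (H n) u2 = k" by (simp add: tau2r_def Sd lS k_def k'_def lH)
        have s\<tau>': "snd \<tau>' (H n) u2 = k" unfolding \<tau>'_def
          by (subst fix2_snd) (use r kQ lH in auto)
        have nc: "next_config own \<sigma>' \<tau>' (H n) = (u2, Q - {k})"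
          unfolding next_config_def using lH True cc s\<tau>' u2_def by simp
        have s1: "s (Suc n) = (u2, Q' - {k'})"
          using sF unfolding nc F_def F2_def Let_def using lH lS True k'_def by simp
        have u2V: "u2 \<in> V" using pgE mv by blast
        have "Inv (Suc n)" unfolding Inv_def using s1 HS[of n] nc u2V QQ QS k' kQ unfolding k_def by auto
        moreover have "C n" unfolding C_def using sn s1 True mv S_eq k'_def by auto
        ultimately show ?thesis by blast
      next
        case False
        define u2 where "u2 = fst \<tau> (S n)"
        have mv: "(u, u2) \<in> E" using l\<tau> Sne lS uV QQ QS False unfolding legal2_def u2_def by blast
        have u2V: "u2 \<in> V" using pgE mv by blast
        have r0: "fst (tau2r own \<tau> (v,P')) (H n) = u2" by (simp add: tau2r_def Sd u2_def)
        have f\<tau>': "fst \<tau>' (H n) = u2" unfolding \<tau>'_def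
          by (subst fix2_fst) (use r0 mv lH in auto)
        define g where "g = snd \<sigma>' (H n) u2"
        have g: "g \<in> {1..d} - Q" using l\<sigma>' Hne lH uV QS False cc mv unfolding legal1_def g_def by blast
        have nc: "next_config own \<sigma>' \<tau>' (H n) = (u2, Q \<union> {g})"
          unfolding next_config_def using lH False cc f\<tau>' g_def by simp
        have sg: "(SOME y. y \<in> (Q \<union> {g}) - Q) = g" using g by auto
        define g' where "g' = (if own u2 \<in> (Q \<union> {g}) - Q' then own u2 else g)"
        have g'': "g' \<in> {1..d} - Q'" using g pgo[OF u2V] QQ unfolding g'_def by auto
        have s1: "s (Suc n) = (u2, Q' \<union> {g'})"
          using sF unfolding nc F_def F2_def Let_def using lH lS False sg unfolding g'_def by simp
        have "Inv (Suc n)" unfolding Inv_def using s1 HS[of n] nc u2V QQ QS g g'' unfolding g'_def by auto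
        moreover have "C n" unfolding C_def using sn s1 False g'' S_eq u2_def by auto
        ultimately show ?thesis by blast
      qed
    qed
    have I0: "Inv 0" unfolding Inv_def using s0 vV PS PP ctl unfolding H_def by auto
    have Iall: "Inv n" for n by (induction n) (use I0 step in auto)
    have "cons2 E d own \<tau> s" unfolding cons2_def using step[OF Iall] unfolding C_def by blast
    from lemB[OF pg win s0 this] have "fst (s n) \<notin> T" .
    then show "fst (play own \<sigma>' \<tau>' (v, P) n) \<notin> T"
      using Iall[of n] unfolding Inv_def play_def H_def by auto
  qed
qed

theorem theorem26:
  fixes V :: "'v set" and E :: "('v \<times> 'v) set" and T :: "'v set" and d :: nat
    and own :: "'v \<Rightarrow> nat" and v :: 'v and P P' :: "nat set"
  assumes "pawn_game V E T d own"
    and "v \<in> V" and "P \<subseteq> {1..d}" and "P' \<subseteq> P"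
  shows "((own v \<in> P \<longrightarrow> own v \<in> P') \<and> wins1 V E T d own (v, P) \<longrightarrow> wins1 V E T d own (v, P'))
       \<and> ((own v \<notin> P' \<longrightarrow> own v \<notin> P) \<and> wins2 V E T d own (v, P') \<longrightarrow> wins2 V E T d own (v, P))"
  using part1[OF assms] part2[OF assms] by blast

end
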